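(* Let $\mathcal{E}_{\mathrm{train}}$ be a finite set of environments, $\mathcal{S}$ a state space, and for each $e\in\mathcal{E}_{\mathrm{train}}$ let $z^e:\mathcal{S}\to\mathbb{R}^k$ (the encoded observation $z^e(s)=\Phi(x^e(s))$). Let $Q$ be a distribution over action sequences $a$, and for each action sequence $a$ let $\rho_a$ be a distribution on $\mathcal{S}$ (the distribution of the state reached by executing $a$, which is the same in every environment). Let $\psi:\mathbb{R}^k\to\mathbb{R}^D$ satisfy $\|\psi(z)-\psi(z')\|_2\ge u\|z-z'\|_2$ for all $z,z'$, with $u>0$. Fix a batch size $B\ge1$. Draw $e,e'$ independently and uniformly from $\mathcal{E}_{\mathrm{train}}$, and independently for $b=1,\dots,B$ draw $a^b\sim Q$ and then $s^e_b\sim\rho_{a^b}$, $s^{e'}_b\sim\rho_{a^b}$ independently. Define $$L^{\mathrm{MMD}}=\mathbb{E}\Big[\Big\|\frac1B\sum_{b=1}^B\psi\big(z^e(s^e_b)\big)-\frac1B\sum_{b=1}^B\psi\big(z^{e'}(s^{e'}_b)\big)\Big\|_2^2\Big].$$ Then $$L^{\mathrm{MMD}}\ge\frac{u^2}{2B}\,\mathbb{E}_{e,e'\sim\mathrm{Unif}(\mathcal{E}_{\mathrm{train}}),\,a\sim Q,\,s\sim\rho_a}\big[\|z^e(s)-z^{e'}(s)\|_2^2\big].$$ In particular, if the right-hand expectation is at least $\delta$, then $L^{\mathrm{MMD}}\ge\frac{u^2\delta}{2B}$.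
   Context: All functions are assumed square-integrable so the expectations are finite. *)

theory Defs
  imports "HOL-Probability.Probability"
begin

definition state_dist :: "'a measure \<Rightarrow> ('a \<Rightarrow> 's measure) \<Rightarrow> 's measure" where
  "state_dist Q \<rho> = Q \<bind> \<rho>"

text \<open>Joint law of (s, s') for one batch element: draw a from Q, then s and s'
  independently from rho a (the states of the two environments e, e').\<close>
definition pair_state_dist ::
  "'a measure \<Rightarrow> ('a \<Rightarrow> 's measure) \<Rightarrow> 's measure \<Rightarrow> ('s \<times> 's) measure" where
  "pair_state_dist Q \<rho> S =
     Q \<bind> (\<lambda>a. \<rho> a \<bind> (\<lambda>s. \<rho> a \<bind> (\<lambda>s'. return (S \<Otimes>\<^sub>M S) (s, s'))))"

definition L_MMD ::
  "'e set \<Rightarrow> 'a measure \<Rightarrow> ('a \<Rightarrow> 's measure) \<Rightarrow> 's measure \<Rightarrow>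
   ('e \<Rightarrow> 's \<Rightarrow> 'k::euclidean_space) \<Rightarrow> ('k \<Rightarrow> 'd::euclidean_space) \<Rightarrow> nat \<Rightarrow> real" where
  "L_MMD E Q \<rho> S z \<psi> B =
     (1 / real (card E) ^ 2) *
     (\<Sum>e\<in>E. \<Sum>e'\<in>E.
        \<integral>\<omega>. (norm ((1 / real B) *\<^sub>R (\<Sum>b<B. \<psi> (z e (fst (\<omega> b))))
                     - (1 / real B) *\<^sub>R (\<Sum>b<B. \<psi> (z e' (snd (\<omega> b))))))\<^sup>2
        \<partial>(\<Pi>\<^sub>M b\<in>{..<B}. pair_state_dist Q \<rho> S))"

definition rhs_expect ::
  "'e set \<Rightarrow> 'a measure \<Rightarrow> ('a \<Rightarrow> 's measure) \<Rightarrow> ('e \<Rightarrow> 's \<Rightarrow> 'k::euclidean_space) \<Rightarrow> real" where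
  "rhs_expect E Q \<rho> z =
     (1 / real (card E) ^ 2) *
     (\<Sum>e\<in>E. \<Sum>e'\<in>E. \<integral>s. (norm (z e s - z e' s))\<^sup>2 \<partial>(state_dist Q \<rho>))"

end

theory Submission
  imports Defs
begin


lemma norm_sq_basis: "(norm (v::'d::euclidean_space))\<^sup>2 = (\<Sum>i\<in>Basis. (v \<bullet> i)\<^sup>2)"
  unfolding power2_norm_eq_inner by (simp only: euclidean_inner[of v v] power2_eq_square)

lemma PiM_marginal:
  fixes h :: "'a \<Rightarrow> real" and B b :: nat
  assumes M: "prob_space M" and h: "integrable M h" and b: "b < B"
  shows "integrable (\<Pi>\<^sub>M j\<in>{..<B}. M) (\<lambda>\<omega>. h (\<omega> b))"
    "(\<integral>\<omega>. h (\<omega> b) \<partial>(\<Pi>\<^sub>M j\<in>{..<B}. M)) = integral\<^sup>L M h"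
proof -
  interpret product_sigma_finite "\<lambda>_::nat. M"
    by (simp add: product_sigma_finite_def prob_space_imp_sigma_finite M)
  interpret prob_space M by (rule M)
  define f where "f = (\<lambda>j x. if j = b then h x else 1)"
  have fi: "integrable M (f j)" for j using h by (cases "j = b") (auto simp: f_def)
  have eq: "(\<Prod>j\<in>{..<B}. f j (\<omega> j)) = h (\<omega> b)" for \<omega>
    using b by (simp add: f_def)
  show "integrable (\<Pi>\<^sub>M j\<in>{..<B}. M) (\<lambda>\<omega>. h (\<omega> b))"
    using product_integrable_prod[of "{..<B}" f] fi by (simp add: eq)
  have "(\<Prod>j\<in>{..<B}. integral\<^sup>L M (f j)) = (\<Prod>j\<in>{..<B}. if j = b then integral\<^sup>L M h else 1)"
    by (intro prod.cong) (auto simp: f_def prob_space)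
  also have "\<dots> = integral\<^sup>L M h" using b by simp
  finally have "(\<Prod>j\<in>{..<B}. integral\<^sup>L M (f j)) = integral\<^sup>L M h" .
  then show "(\<integral>\<omega>. h (\<omega> b) \<partial>(\<Pi>\<^sub>M j\<in>{..<B}. M)) = integral\<^sup>L M h"
    using product_integral_prod[of "{..<B}" f] fi by (simp add: eq)
qed

lemma PiM_pair:
  fixes h k :: "'a \<Rightarrow> real" and B b c :: nat
  assumes M: "prob_space M" and h: "integrable M h" and k: "integrable M k"
    and b: "b < B" and c: "c < B" and bc: "b \<noteq> c"
  shows "integrable (\<Pi>\<^sub>M j\<in>{..<B}. M) (\<lambda>\<omega>. h (\<omega> b) * k (\<omega> c))"
    "(\<integral>\<omega>. h (\<omega> b) * k (\<omega> c) \<partial>(\<Pi>\<^sub>M j\<in>{..<B}. M)) = integral\<^sup>L M h * integral\<^sup>L M k"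
proof -
  interpret product_sigma_finite "\<lambda>_::nat. M"
    by (simp add: product_sigma_finite_def prob_space_imp_sigma_finite M)
  interpret prob_space M by (rule M)
  define f where "f = (\<lambda>j x. if j = b then h x else if j = c then k x else 1)"
  have fi: "integrable M (f j)" for j using h k by (cases "j = b"; cases "j = c") (auto simp: f_def)
  have split: "f j x = (if j = b then h x else 1) * (if j = c then k x else 1)" for j x
    using bc by (auto simp: f_def)
  have eq: "(\<Prod>j\<in>{..<B}. f j (\<omega> j)) = h (\<omega> b) * k (\<omega> c)" for \<omega>
    using b c by (simp add: split prod.distrib)
  show "integrable (\<Pi>\<^sub>M j\<in>{..<B}. M) (\<lambda>\<omega>. h (\<omega> b) * k (\<omega> c))"
    using product_integrable_prod[of "{..<B}" f] fi by (simp add: eq)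
  have "(\<Prod>j\<in>{..<B}. integral\<^sup>L M (f j)) = (\<Prod>j\<in>{..<B}. (if j = b then integral\<^sup>L M h else 1) * (if j = c then integral\<^sup>L M k else 1))"
    using bc by (intro prod.cong) (auto simp: f_def prob_space)
  also have "\<dots> = integral\<^sup>L M h * integral\<^sup>L M k"
    using b c by (simp add: prod.distrib prod.delta)
  finally show "(\<integral>\<omega>. h (\<omega> b) * k (\<omega> c) \<partial>(\<Pi>\<^sub>M j\<in>{..<B}. M)) = integral\<^sup>L M h * integral\<^sup>L M k"
    using product_integral_prod[of "{..<B}" f] fi by (simp add: eq)
qed

lemma stepA:
  fixes X :: "'a \<Rightarrow> 'd::euclidean_space" and B :: nat
  assumes M: "prob_space M" and Xm[measurable]: "X \<in> borel_measurable M"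
    and Xi: "integrable M (\<lambda>x. (norm (X x))\<^sup>2)"
  shows "real B * (\<integral>x. (norm (X x))\<^sup>2 \<partial>M) \<le> (\<integral>\<omega>. (norm (\<Sum>b<B. X (\<omega> b)))\<^sup>2 \<partial>(\<Pi>\<^sub>M j\<in>{..<B}. M))"
proof -
  interpret prob_space M by (rule M)
  let ?\<Omega> = "\<Pi>\<^sub>M j\<in>{..<B}. M"
  have xsq: "integrable M (\<lambda>p. (X p \<bullet> i)\<^sup>2)" if i: "i \<in> Basis" for i
  proof (rule Bochner_Integration.integrable_bound[OF Xi])
    show "(\<lambda>p. (X p \<bullet> i)\<^sup>2) \<in> borel_measurable M" by measurable
    show "AE x in M. norm ((X x \<bullet> i)\<^sup>2) \<le> norm ((norm (X x))\<^sup>2)"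
    proof (intro AE_I2)
      fix x have "\<bar>X x \<bullet> i\<bar> \<le> \<bar>norm (X x)\<bar>" using Basis_le_norm[OF i] by simp
      then show "norm ((X x \<bullet> i)\<^sup>2) \<le> norm ((norm (X x))\<^sup>2)"
        by (metis abs_le_square_iff real_norm_def abs_power2 norm_power)
    qed
  qed
  have xi: "integrable M (\<lambda>p. X p \<bullet> i)" if i: "i \<in> Basis" for i
    by (rule square_integrable_imp_integrable) (use xsq[OF i] in auto)
  define T where "T i b c = (\<integral>\<omega>. (X (\<omega> b) \<bullet> i) * (X (\<omega> c) \<bullet> i) \<partial>?\<Omega>)" for i b c
  have Tint: "integrable ?\<Omega> (\<lambda>\<omega>. (X (\<omega> b) \<bullet> i) * (X (\<omega> c) \<bullet> i))"
    if i: "i \<in> Basis" and b: "b < B" and c: "c < B" for i b c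
  proof (cases "b = c")
    case True
    then show ?thesis using PiM_marginal(1)[OF M xsq[OF i] b] by (simp add: power2_eq_square)
  next
    case False
    then show ?thesis using PiM_pair(1)[OF M xi[OF i] xi[OF i] b c] by simp
  qed
  have Tbb: "T i b b = (\<integral>p. (X p \<bullet> i)\<^sup>2 \<partial>M)" if i: "i \<in> Basis" and b: "b < B" for i b
    using PiM_marginal(2)[OF M xsq[OF i] b] by (simp add: T_def power2_eq_square)
  have Tbc: "T i b c \<ge> 0" if i: "i \<in> Basis" and b: "b < B" and c: "c < B" and "b \<noteq> c" for i b c
    using PiM_pair(2)[OF M xi[OF i] xi[OF i] b c \<open>b \<noteq> c\<close>] by (simp add: T_def)
  have expand: "(norm (\<Sum>b<B. X (\<omega> b)))\<^sup>2 = (\<Sum>i\<in>Basis. \<Sum>b<B. \<Sum>c<B. (X (\<omega> b) \<bullet> i) * (X (\<omega> c) \<bullet> i))" for \<omega>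
    unfolding norm_sq_basis by (simp only: inner_sum_left power2_eq_square sum_product)
  have "(\<integral>\<omega>. (norm (\<Sum>b<B. X (\<omega> b)))\<^sup>2 \<partial>?\<Omega>) = (\<Sum>i\<in>Basis. \<Sum>b<B. \<Sum>c<B. T i b c)"
    unfolding expand T_def
    apply (rule trans[OF Bochner_Integration.integral_sum])
     apply (fastforce intro!: integrable_sum Tint)
    apply (intro sum.cong refl)
    apply (rule trans[OF Bochner_Integration.integral_sum])
     apply (fastforce intro!: integrable_sum Tint)
    apply (intro sum.cong refl)
    apply (rule trans[OF Bochner_Integration.integral_sum])
     apply (fastforce intro!: integrable_sum Tint)
    apply (intro sum.cong refl)
    done
  also have "\<dots> \<ge> (\<Sum>i\<in>Basis. \<Sum>b<B. (\<integral>p. (X p \<bullet> i)\<^sup>2 \<partial>M))"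
  proof (intro sum_mono)
    fix i :: 'd and b assume i: "i \<in> Basis" and b: "b \<in> {..<B}"
    have "(\<Sum>c<B. T i b c) = T i b b + (\<Sum>c\<in>{..<B} - {b}. T i b c)"
      using b by (simp add: sum.remove)
    also have "\<dots> \<ge> T i b b" using Tbc[OF i] b by (intro add_increasing2 sum_nonneg) auto
    finally show "(\<integral>p. (X p \<bullet> i)\<^sup>2 \<partial>M) \<le> (\<Sum>c<B. T i b c)" using Tbb[OF i] b by simp
  qed
  also have "(\<Sum>i\<in>Basis. \<Sum>b<B. (\<integral>p. (X p \<bullet> i)\<^sup>2 \<partial>M)) = real B * (\<integral>x. (norm (X x))\<^sup>2 \<partial>M)"
    by (simp add: norm_sq_basis Bochner_Integration.integral_sum xsq sum_distrib_left)
  finally show ?thesis .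
qed



lemma sqdiff: "(norm (a - b))\<^sup>2 = (norm a)\<^sup>2 - 2 * (a \<bullet> b) + (norm (b::'k::real_inner))\<^sup>2"
  by (simp add: power2_norm_eq_inner inner_diff_left inner_diff_right inner_commute)

lemma sqsum: "(norm (a + b))\<^sup>2 = (norm a)\<^sup>2 + 2 * (a \<bullet> b) + (norm (b::'k::real_inner))\<^sup>2"
  by (simp add: power2_norm_eq_inner inner_add_left inner_add_right inner_commute)

lemma sq_int_imp_int:
  fixes F :: "'a \<Rightarrow> 'k::euclidean_space"
  assumes "finite_measure M" "F \<in> borel_measurable M" "integrable M (\<lambda>x. (norm (F x))\<^sup>2)"
  shows "integrable M F"
proof (rule Bochner_Integration.integrable_bound[of M "\<lambda>x. 1 + (norm (F x))\<^sup>2"])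
  show "integrable M (\<lambda>x. 1 + (norm (F x))\<^sup>2)"
    using assms by (intro Bochner_Integration.integrable_add finite_measure.integrable_const) auto
  show "AE x in M. norm (F x) \<le> norm (1 + (norm (F x))\<^sup>2)"
  proof (intro AE_I2)
    fix x have "0 \<le> (norm (F x) - 1)\<^sup>2" by simp
    then have "2 * norm (F x) \<le> (norm (F x))\<^sup>2 + 1" by (simp add: power2_diff)
    then have "norm (F x) \<le> 1 + (norm (F x))\<^sup>2"
      using norm_ge_zero[of "F x"] by linarith
    then show "norm (F x) \<le> norm (1 + (norm (F x))\<^sup>2)" by simp
  qed
qed (use assms in auto)

lemma inner_int:
  fixes F G :: "'a \<Rightarrow> 'k::euclidean_space"
  assumes [measurable]: "F \<in> borel_measurable M" "G \<in> borel_measurable M"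
    and "integrable M (\<lambda>x. (norm (F x))\<^sup>2)" "integrable M (\<lambda>x. (norm (G x))\<^sup>2)"
  shows "integrable M (\<lambda>x. F x \<bullet> G x)"
proof (rule Bochner_Integration.integrable_bound[of M "\<lambda>x. (norm (F x))\<^sup>2 + (norm (G x))\<^sup>2"])
  show "integrable M (\<lambda>x. (norm (F x))\<^sup>2 + (norm (G x))\<^sup>2)"
    using assms by auto
  show "AE x in M. norm (F x \<bullet> G x) \<le> norm ((norm (F x))\<^sup>2 + (norm (G x))\<^sup>2)"
  proof (intro AE_I2)
    fix x
    have "\<bar>F x \<bullet> G x\<bar> \<le> norm (F x) * norm (G x)" by (rule Cauchy_Schwarz_ineq2)
    also have "\<dots> \<le> (norm (F x))\<^sup>2 + (norm (G x))\<^sup>2"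
    proof -
      have "0 \<le> (norm (F x) - norm (G x))\<^sup>2" by simp
      moreover have "0 \<le> norm (F x) * norm (G x)" by simp
      moreover have "0 \<le> (norm (F x) - norm (G x))\<^sup>2 \<Longrightarrow> 2 * (norm (F x) * norm (G x)) \<le> (norm (F x))\<^sup>2 + (norm (G x))\<^sup>2"
        by (simp add: power2_diff)
      ultimately show ?thesis by linarith
    qed
    finally show "norm (F x \<bullet> G x) \<le> norm ((norm (F x))\<^sup>2 + (norm (G x))\<^sup>2)" by simp
  qed
qed measurable

lemma jensen_sq:
  fixes h :: "'a \<Rightarrow> real"
  assumes "prob_space M" "integrable M h" "integrable M (\<lambda>x. (h x)\<^sup>2)"
  shows "(integral\<^sup>L M h)\<^sup>2 \<le> (\<integral>x. (h x)\<^sup>2 \<partial>M)"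
  using prob_space.variance_eq[OF assms] prob_space.variance_positive[OF assms(1), of h] by simp

lemma per_a:
  fixes F G :: "'s \<Rightarrow> 'k::euclidean_space"
  assumes M: "prob_space M" and [measurable]: "F \<in> borel_measurable M" "G \<in> borel_measurable M"
    and Fi: "integrable M (\<lambda>x. (norm (F x))\<^sup>2)" and Gi: "integrable M (\<lambda>x. (norm (G x))\<^sup>2)"
  shows "(\<integral>\<^sup>+x. ennreal ((norm (F x - G x))\<^sup>2) \<partial>M)
         \<le> 2 * (\<integral>\<^sup>+x. \<integral>\<^sup>+y. ennreal ((norm (F x - G y))\<^sup>2) \<partial>M \<partial>M)"
proof -
  interpret prob_space M by (rule M)
  have FI: "integrable M F" by (rule sq_int_imp_int) (use Fi in auto)
  have GI: "integrable M G" by (rule sq_int_imp_int) (use Gi in auto)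
  define mF where "mF = integral\<^sup>L M F"
  define mG where "mG = integral\<^sup>L M G"
  define cF where "cF = (\<integral>x. (norm (F x))\<^sup>2 \<partial>M)"
  define cG where "cG = (\<integral>x. (norm (G x))\<^sup>2 \<partial>M)"
  have inner: "integrable M (\<lambda>y. (norm (F x - G y))\<^sup>2) \<and>
      (\<integral>y. (norm (F x - G y))\<^sup>2 \<partial>M) = (norm (F x))\<^sup>2 - 2 * (F x \<bullet> mG) + cG" for x
  proof -
    have eq: "(\<lambda>y. (norm (F x - G y))\<^sup>2) = (\<lambda>y. (norm (F x))\<^sup>2 - 2 * (F x \<bullet> G y) + (norm (G y))\<^sup>2)"
      by (simp add: sqdiff)
    show ?thesis unfolding eq using GI Gi
      by (simp add: mG_def cG_def prob_space)
  qed
  define \<phi> where "\<phi> x = (norm (F x))\<^sup>2 - 2 * (F x \<bullet> mG) + cG" for x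
  have \<phi>I: "integrable M \<phi>" unfolding \<phi>_def[abs_def] using FI Fi by simp
  have \<phi>int: "integral\<^sup>L M \<phi> = cF - 2 * (mF \<bullet> mG) + cG"
    unfolding \<phi>_def[abs_def] using FI Fi by (simp add: cF_def mF_def prob_space)
  have \<phi>nn: "0 \<le> \<phi> x" for x
    using inner[of x] integral_nonneg_AE[of "\<lambda>y. (norm (F x - G y))\<^sup>2" M] by (simp add: \<phi>_def)
  have R: "(\<integral>\<^sup>+x. \<integral>\<^sup>+y. ennreal ((norm (F x - G y))\<^sup>2) \<partial>M \<partial>M) = ennreal (cF - 2 * (mF \<bullet> mG) + cG)"
  proof -
    have "(\<integral>\<^sup>+x. \<integral>\<^sup>+y. ennreal ((norm (F x - G y))\<^sup>2) \<partial>M \<partial>M) = (\<integral>\<^sup>+x. ennreal (\<phi> x) \<partial>M)"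
      by (intro nn_integral_cong) (use inner in \<open>simp add: nn_integral_eq_integral \<phi>_def\<close>)
    also have "\<dots> = ennreal (integral\<^sup>L M \<phi>)"
      by (rule nn_integral_eq_integral[OF \<phi>I]) (simp add: \<phi>nn)
    finally show ?thesis by (simp add: \<phi>int)
  qed
  have FGI: "integrable M (\<lambda>x. F x \<bullet> G x)" by (rule inner_int) (use Fi Gi in auto)
  have eqd: "(\<lambda>x. (norm (F x - G x))\<^sup>2) = (\<lambda>x. (norm (F x))\<^sup>2 - 2 * (F x \<bullet> G x) + (norm (G x))\<^sup>2)"
    by (simp add: sqdiff)
  have eqs: "(\<lambda>x. (norm (F x + G x))\<^sup>2) = (\<lambda>x. (norm (F x))\<^sup>2 + 2 * (F x \<bullet> G x) + (norm (G x))\<^sup>2)"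
    by (simp add: sqsum)
  define cFG where "cFG = (\<integral>x. F x \<bullet> G x \<partial>M)"
  have dI: "integrable M (\<lambda>x. (norm (F x - G x))\<^sup>2)" unfolding eqd using Fi Gi FGI by simp
  have dint: "(\<integral>x. (norm (F x - G x))\<^sup>2 \<partial>M) = cF - 2 * cFG + cG"
    unfolding eqd using Fi Gi FGI by (simp add: cF_def cG_def cFG_def)
  have sI: "integrable M (\<lambda>x. (norm (F x + G x))\<^sup>2)" unfolding eqs using Fi Gi FGI by simp
  have sint: "(\<integral>x. (norm (F x + G x))\<^sup>2 \<partial>M) = cF + 2 * cFG + cG"
    unfolding eqs using Fi Gi FGI by (simp add: cF_def cG_def cFG_def)
  have nI: "integrable M (\<lambda>x. norm (F x + G x))"
    by (rule integrable_norm, rule sq_int_imp_int) (use sI in auto)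
  have "norm (mF + mG) \<le> (\<integral>x. norm (F x + G x) \<partial>M)"
  proof -
    have "mF + mG = (\<integral>x. F x + G x \<partial>M)"
      unfolding mF_def mG_def using FI GI by (rule Bochner_Integration.integral_add[symmetric])
    then show ?thesis by (simp add: integral_norm_bound)
  qed
  then have "(norm (mF + mG))\<^sup>2 \<le> (\<integral>x. norm (F x + G x) \<partial>M)\<^sup>2"
    by (intro power_mono) auto
  also have "\<dots> \<le> (\<integral>x. (norm (F x + G x))\<^sup>2 \<partial>M)"
    by (rule jensen_sq[OF M nI]) (use sI in simp)
  finally have J: "(norm (mF + mG))\<^sup>2 \<le> cF + 2 * cFG + cG" by (simp add: sint)
  have "0 \<le> (norm (mF - mG))\<^sup>2" by simp
  then have "4 * (mF \<bullet> mG) \<le> (norm (mF + mG))\<^sup>2" by (simp add: sqdiff sqsum)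
  with J have key: "cF - 2 * cFG + cG \<le> 2 * (cF - 2 * (mF \<bullet> mG) + cG)" by (simp add: algebra_simps)
  have L: "(\<integral>\<^sup>+x. ennreal ((norm (F x - G x))\<^sup>2) \<partial>M) = ennreal (cF - 2 * cFG + cG)"
    by (subst nn_integral_eq_integral[OF dI]) (auto simp: dint)
  have "0 \<le> cF - 2 * (mF \<bullet> mG) + cG" using \<phi>int integral_nonneg_AE[of \<phi> M] \<phi>nn by simp
  then have "2 * ennreal (cF - 2 * (mF \<bullet> mG) + cG) = ennreal (2 * (cF - 2 * (mF \<bullet> mG) + cG))"
    using ennreal_mult[of 2 "cF - 2 * (mF \<bullet> mG) + cG"] by simp
  then show ?thesis unfolding L R using key by (simp add: ennreal_leI)
qed


locale mmd =
  fixes Q :: "'a measure" and \<rho> :: "'a \<Rightarrow> 's measure" and S :: "'s measure"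
  assumes Q: "prob_space Q" and rho[measurable]: "\<rho> \<in> Q \<rightarrow>\<^sub>M prob_algebra S"
begin

definition "K a = \<rho> a \<bind> (\<lambda>s. \<rho> a \<bind> (\<lambda>s'. return (S \<Otimes>\<^sub>M S) (s, s')))"
abbreviation "P \<equiv> pair_state_dist Q \<rho> S"
abbreviation "SD \<equiv> state_dist Q \<rho>"

lemma rho_a: assumes "a \<in> space Q" shows "prob_space (\<rho> a)" "sets (\<rho> a) = sets S"
  "space (\<rho> a) = space S"
  using measurable_space[OF rho assms] by (auto simp: space_prob_algebra cong: sets_eq_imp_space_eq)


lemma K_meas[measurable]: "K \<in> Q \<rightarrow>\<^sub>M prob_algebra (S \<Otimes>\<^sub>M S)"
  unfolding K_def[abs_def] by measurable

lemma P_eq: "P = Q \<bind> K" unfolding pair_state_dist_def K_def by simp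

lemma Q_ne: "space Q \<noteq> {}" using prob_space.not_empty[OF Q] .

lemma sets_P[measurable_cong]: "sets P = sets (S \<Otimes>\<^sub>M S)"
  unfolding P_eq using measurable_space[OF K_meas] Q_ne
  by (intro sets_bind) (auto simp: space_prob_algebra)

lemma space_P: "space P = space (S \<Otimes>\<^sub>M S)" using sets_P by (rule sets_eq_imp_space_eq)

lemma P_prob: "prob_space P"
  unfolding P_eq
  by (rule prob_space.prob_space_bind[OF Q _ measurable_prob_algebraD[OF K_meas]])
     (use measurable_space[OF K_meas] in \<open>auto simp: space_prob_algebra\<close>)

lemma SD_eq: "SD = Q \<bind> \<rho>" unfolding state_dist_def ..

lemma sets_SD[measurable_cong]: "sets SD = sets S"
  unfolding SD_eq using measurable_space[OF rho] Q_ne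
  by (intro sets_bind) (auto simp: space_prob_algebra)

lemma space_SD: "space SD = space S" using sets_SD by (rule sets_eq_imp_space_eq)

lemma SD_prob: "prob_space SD"
  unfolding SD_eq
  by (rule prob_space.prob_space_bind[OF Q _ measurable_prob_algebraD[OF rho]])
     (use measurable_space[OF rho] in \<open>auto simp: space_prob_algebra\<close>)

lemma nn_SD: assumes [measurable]: "\<phi> \<in> borel_measurable S"
  shows "(\<integral>\<^sup>+x. \<phi> x \<partial>SD) = (\<integral>\<^sup>+a. \<integral>\<^sup>+x. \<phi> x \<partial>\<rho> a \<partial>Q)"
  unfolding SD_eq by (rule nn_integral_bind[OF assms measurable_prob_algebraD[OF rho]])

lemma nn_K: assumes [measurable]: "h \<in> borel_measurable (S \<Otimes>\<^sub>M S)" and a: "a \<in> space Q"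
  shows "(\<integral>\<^sup>+x. h x \<partial>K a) = (\<integral>\<^sup>+s. \<integral>\<^sup>+s'. h (s, s') \<partial>\<rho> a \<partial>\<rho> a)"
proof -
  have [measurable]: "\<rho> a \<in> space (prob_algebra S)" using measurable_space[OF rho a] .
  have m1: "(\<lambda>s. \<rho> a \<bind> (\<lambda>s'. return (S \<Otimes>\<^sub>M S) (s, s'))) \<in> \<rho> a \<rightarrow>\<^sub>M subprob_algebra (S \<Otimes>\<^sub>M S)"
    unfolding measurable_cong_sets[OF rho_a(2)[OF a] refl]
    by (rule measurable_prob_algebraD) measurable
  have "(\<integral>\<^sup>+x. h x \<partial>K a) = (\<integral>\<^sup>+s. \<integral>\<^sup>+x. h x \<partial>(\<rho> a \<bind> (\<lambda>s'. return (S \<Otimes>\<^sub>M S) (s, s'))) \<partial>\<rho> a)"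
    unfolding K_def by (rule nn_integral_bind[OF assms(1) m1])
  also have "\<dots> = (\<integral>\<^sup>+s. \<integral>\<^sup>+s'. h (s, s') \<partial>\<rho> a \<partial>\<rho> a)"
  proof (rule nn_integral_cong)
    fix s assume s: "s \<in> space (\<rho> a)"
    have m2: "(\<lambda>s'. return (S \<Otimes>\<^sub>M S) (s, s')) \<in> \<rho> a \<rightarrow>\<^sub>M subprob_algebra (S \<Otimes>\<^sub>M S)"
      unfolding measurable_cong_sets[OF rho_a(2)[OF a] refl]
      using s rho_a(3)[OF a]
      by (intro measurable_compose[OF _ return_measurable] measurable_Pair measurable_const measurable_ident_sets) auto
    show "(\<integral>\<^sup>+x. h x \<partial>(\<rho> a \<bind> (\<lambda>s'. return (S \<Otimes>\<^sub>M S) (s, s')))) = (\<integral>\<^sup>+s'. h (s, s') \<partial>\<rho> a)"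
      unfolding nn_integral_bind[OF assms(1) m2]
      using s rho_a(3)[OF a]
      by (intro nn_integral_cong) (auto simp: nn_integral_return space_pair_measure)
  qed
  finally show ?thesis .
qed

lemma nn_P: assumes [measurable]: "h \<in> borel_measurable (S \<Otimes>\<^sub>M S)"
  shows "(\<integral>\<^sup>+x. h x \<partial>P) = (\<integral>\<^sup>+a. \<integral>\<^sup>+s. \<integral>\<^sup>+s'. h (s, s') \<partial>\<rho> a \<partial>\<rho> a \<partial>Q)"
  unfolding P_eq nn_integral_bind[OF assms measurable_prob_algebraD[OF K_meas]]
  by (intro nn_integral_cong nn_K assms)

lemma nn_P_fst: assumes [measurable]: "\<phi> \<in> borel_measurable S"
  shows "(\<integral>\<^sup>+x. \<phi> (fst x) \<partial>P) = (\<integral>\<^sup>+x. \<phi> x \<partial>SD)"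
  unfolding nn_SD[OF assms] nn_P[of "\<lambda>x. \<phi> (fst x)", OF measurable_compose[OF measurable_fst assms]]
proof (intro nn_integral_cong)
  fix a s assume a: "a \<in> space Q" and s: "s \<in> space (\<rho> a)"
  show "(\<integral>\<^sup>+s'. \<phi> (fst (s, s')) \<partial>\<rho> a) = \<phi> s"
    using prob_space.emeasure_space_1[OF rho_a(1)[OF a]] by simp
qed

lemma nn_P_snd: assumes [measurable]: "\<phi> \<in> borel_measurable S"
  shows "(\<integral>\<^sup>+x. \<phi> (snd x) \<partial>P) = (\<integral>\<^sup>+x. \<phi> x \<partial>SD)"
  unfolding nn_SD[OF assms] nn_P[of "\<lambda>x. \<phi> (snd x)", OF measurable_compose[OF measurable_snd assms]]
proof (rule nn_integral_cong)
  fix a assume a: "a \<in> space Q"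
  show "(\<integral>\<^sup>+s. \<integral>\<^sup>+s'. \<phi> (snd (s, s')) \<partial>\<rho> a \<partial>\<rho> a) = (\<integral>\<^sup>+x. \<phi> x \<partial>\<rho> a)"
    using prob_space.emeasure_space_1[OF rho_a(1)[OF a]] by simp
qed


lemma rho_sub[measurable]: "\<rho> \<in> Q \<rightarrow>\<^sub>M subprob_algebra S"
  by (rule measurable_prob_algebraD[OF rho])

lemma int_P_fst:
  fixes \<phi> :: "'s \<Rightarrow> real"
  assumes [measurable]: "\<phi> \<in> borel_measurable S" and nn: "\<And>x. 0 \<le> \<phi> x" and i: "integrable SD \<phi>"
  shows "integrable P (\<lambda>p. \<phi> (fst p))"
proof (rule integrableI_nonneg)
  show "(\<lambda>p. \<phi> (fst p)) \<in> borel_measurable P" by measurable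
  show "AE x in P. 0 \<le> \<phi> (fst x)" using nn by simp
  have "(\<integral>\<^sup>+x. ennreal (\<phi> x) \<partial>SD) < \<infinity>"
    using i nn by (simp add: integrable_iff_bounded)
  then show "(\<integral>\<^sup>+x. ennreal (\<phi> (fst x)) \<partial>P) < \<infinity>"
    using nn_P_fst[of "\<lambda>x. ennreal (\<phi> x)"] by simp
qed

lemma int_P_snd:
  fixes \<phi> :: "'s \<Rightarrow> real"
  assumes [measurable]: "\<phi> \<in> borel_measurable S" and nn: "\<And>x. 0 \<le> \<phi> x" and i: "integrable SD \<phi>"
  shows "integrable P (\<lambda>p. \<phi> (snd p))"
proof (rule integrableI_nonneg)
  show "(\<lambda>p. \<phi> (snd p)) \<in> borel_measurable P" by measurable
  show "AE x in P. 0 \<le> \<phi> (snd x)" using nn by simp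
  have "(\<integral>\<^sup>+x. ennreal (\<phi> x) \<partial>SD) < \<infinity>"
    using i nn by (simp add: integrable_iff_bounded)
  then show "(\<integral>\<^sup>+x. ennreal (\<phi> (snd x)) \<partial>P) < \<infinity>"
    using nn_P_snd[of "\<lambda>x. ennreal (\<phi> x)"] by simp
qed

lemma diff_sq_bound: "(norm (a - b))\<^sup>2 \<le> 2 * (norm a)\<^sup>2 + 2 * (norm (b::'k::real_normed_vector))\<^sup>2"
proof -
  have "norm (a - b) \<le> norm a + norm b" by (rule norm_triangle_ineq4)
  then have "(norm (a - b))\<^sup>2 \<le> (norm a + norm b)\<^sup>2" by (intro power_mono) auto
  also have "\<dots> \<le> 2 * (norm a)\<^sup>2 + 2 * (norm b)\<^sup>2"
  proof -
    have "0 \<le> (norm a - norm b)\<^sup>2" by simp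
    then show ?thesis by (simp add: power2_sum power2_diff)
  qed
  finally show ?thesis .
qed

lemma int_P_diff:
  fixes F G :: "'s \<Rightarrow> 'k::euclidean_space"
  assumes [measurable]: "F \<in> borel_measurable S" "G \<in> borel_measurable S"
    and Fi: "integrable SD (\<lambda>s. (norm (F s))\<^sup>2)" and Gi: "integrable SD (\<lambda>s. (norm (G s))\<^sup>2)"
  shows "integrable P (\<lambda>p. (norm (F (fst p) - G (snd p)))\<^sup>2)"
proof (rule Bochner_Integration.integrable_bound[of P "\<lambda>p. 2 * (norm (F (fst p)))\<^sup>2 + 2 * (norm (G (snd p)))\<^sup>2"])
  show "integrable P (\<lambda>p. 2 * (norm (F (fst p)))\<^sup>2 + 2 * (norm (G (snd p)))\<^sup>2)"
    using int_P_fst[of "\<lambda>s. (norm (F s))\<^sup>2"] int_P_snd[of "\<lambda>s. (norm (G s))\<^sup>2"] Fi Gi by simp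
  show "AE x in P. norm ((norm (F (fst x) - G (snd x)))\<^sup>2) \<le> norm (2 * (norm (F (fst x)))\<^sup>2 + 2 * (norm (G (snd x)))\<^sup>2)"
    using diff_sq_bound by (intro AE_I2) simp
qed measurable

lemma AE_rho_int:
  fixes F :: "'s \<Rightarrow> 'k::euclidean_space"
  assumes [measurable]: "F \<in> borel_measurable S" and Fi: "integrable SD (\<lambda>s. (norm (F s))\<^sup>2)"
  shows "AE a in Q. integrable (\<rho> a) (\<lambda>s. (norm (F s))\<^sup>2)"
proof -
  have "(\<integral>\<^sup>+a. \<integral>\<^sup>+x. ennreal ((norm (F x))\<^sup>2) \<partial>\<rho> a \<partial>Q) \<noteq> \<infinity>"
    using Fi nn_SD[of "\<lambda>x. ennreal ((norm (F x))\<^sup>2)"] by (simp add: integrable_iff_bounded)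
  then have "AE a in Q. (\<integral>\<^sup>+x. ennreal ((norm (F x))\<^sup>2) \<partial>\<rho> a) \<noteq> \<infinity>"
    by (intro nn_integral_PInf_AE) measurable
  then show ?thesis
  proof (rule AE_mp, intro AE_I2 impI)
    fix a assume a: "a \<in> space Q" and fin: "(\<integral>\<^sup>+x. ennreal ((norm (F x))\<^sup>2) \<partial>\<rho> a) \<noteq> \<infinity>"
    have [measurable]: "F \<in> borel_measurable (\<rho> a)" by (subst measurable_cong_sets[OF rho_a(2)[OF a] refl]) simp
    show "integrable (\<rho> a) (\<lambda>s. (norm (F s))\<^sup>2)"
      using fin by (intro integrableI_nonneg) (auto simp: top.not_eq_extremum)
  qed
qed

lemma stepC:
  fixes F G :: "'s \<Rightarrow> 'k::euclidean_space"
  assumes [measurable]: "F \<in> borel_measurable S" "G \<in> borel_measurable S"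
    and Fi: "integrable SD (\<lambda>s. (norm (F s))\<^sup>2)" and Gi: "integrable SD (\<lambda>s. (norm (G s))\<^sup>2)"
  shows "(\<integral>s. (norm (F s - G s))\<^sup>2 \<partial>SD) \<le> 2 * (\<integral>p. (norm (F (fst p) - G (snd p)))\<^sup>2 \<partial>P)"
proof -
  have hm: "(\<lambda>p. ennreal ((norm (F (fst p) - G (snd p)))\<^sup>2)) \<in> borel_measurable (S \<Otimes>\<^sub>M S)" by measurable
  have "(\<integral>\<^sup>+s. ennreal ((norm (F s - G s))\<^sup>2) \<partial>SD)
      = (\<integral>\<^sup>+a. \<integral>\<^sup>+s. ennreal ((norm (F s - G s))\<^sup>2) \<partial>\<rho> a \<partial>Q)"
    by (rule nn_SD) measurable
  also have "\<dots> \<le> (\<integral>\<^sup>+a. 2 * (\<integral>\<^sup>+x. \<integral>\<^sup>+y. ennreal ((norm (F x - G y))\<^sup>2) \<partial>\<rho> a \<partial>\<rho> a) \<partial>Q)"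
  proof (rule nn_integral_mono_AE)
    show "AE a in Q. (\<integral>\<^sup>+s. ennreal ((norm (F s - G s))\<^sup>2) \<partial>\<rho> a)
        \<le> 2 * (\<integral>\<^sup>+x. \<integral>\<^sup>+y. ennreal ((norm (F x - G y))\<^sup>2) \<partial>\<rho> a \<partial>\<rho> a)"
      using AE_rho_int[OF assms(1) Fi] AE_rho_int[OF assms(2) Gi] AE_space
    proof (eventually_elim)
      case (elim a)
      then have a: "a \<in> space Q" by simp
      have [measurable]: "F \<in> borel_measurable (\<rho> a)" "G \<in> borel_measurable (\<rho> a)"
        by (subst measurable_cong_sets[OF rho_a(2)[OF a] refl], simp)+
      show ?case by (rule per_a[OF rho_a(1)[OF a]]) (use elim in auto)
    qed
  qed
  also have "\<dots> = (\<integral>\<^sup>+a. 2 * (\<integral>\<^sup>+p. ennreal ((norm (F (fst p) - G (snd p)))\<^sup>2) \<partial>K a) \<partial>Q)"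
    by (intro nn_integral_cong) (subst nn_K, auto)
  also have "\<dots> = 2 * (\<integral>\<^sup>+a. (\<integral>\<^sup>+p. ennreal ((norm (F (fst p) - G (snd p)))\<^sup>2) \<partial>K a) \<partial>Q)"
    by (rule nn_integral_cmult) (intro nn_integral_measurable_subprob_algebra2[where N="S \<Otimes>\<^sub>M S"] measurable_prob_algebraD[OF K_meas]; measurable)
  also have "\<dots> = 2 * (\<integral>\<^sup>+p. ennreal ((norm (F (fst p) - G (snd p)))\<^sup>2) \<partial>P)"
    unfolding P_eq by (subst nn_integral_bind[OF _ measurable_prob_algebraD[OF K_meas]]) (simp_all add: hm)
  finally have le: "(\<integral>\<^sup>+s. ennreal ((norm (F s - G s))\<^sup>2) \<partial>SD) \<le> 2 * (\<integral>\<^sup>+p. ennreal ((norm (F (fst p) - G (snd p)))\<^sup>2) \<partial>P)" .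
  have iP: "integrable P (\<lambda>p. (norm (F (fst p) - G (snd p)))\<^sup>2)" by (rule int_P_diff) fact+
  have "(\<integral>\<^sup>+p. ennreal ((norm (F (fst p) - G (snd p)))\<^sup>2) \<partial>P) = ennreal (\<integral>p. (norm (F (fst p) - G (snd p)))\<^sup>2 \<partial>P)"
    by (rule nn_integral_eq_integral[OF iP]) simp
  moreover have "(\<integral>s. (norm (F s - G s))\<^sup>2 \<partial>SD) = enn2real (\<integral>\<^sup>+s. ennreal ((norm (F s - G s))\<^sup>2) \<partial>SD)"
    by (rule integral_eq_nn_integral) auto
  moreover have I0: "0 \<le> (\<integral>p. (norm (F (fst p) - G (snd p)))\<^sup>2 \<partial>P)" by simp
  ultimately have le2: "(\<integral>\<^sup>+s. ennreal ((norm (F s - G s))\<^sup>2) \<partial>SD) \<le> ennreal (2 * (\<integral>p. (norm (F (fst p) - G (snd p)))\<^sup>2 \<partial>P))"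
    and eqL: "(\<integral>s. (norm (F s - G s))\<^sup>2 \<partial>SD) = enn2real (\<integral>\<^sup>+s. ennreal ((norm (F s - G s))\<^sup>2) \<partial>SD)"
    using le ennreal_mult[of 2 "\<integral>p. (norm (F (fst p) - G (snd p)))\<^sup>2 \<partial>P"] by simp_all
  have "enn2real (\<integral>\<^sup>+s. ennreal ((norm (F s - G s))\<^sup>2) \<partial>SD) \<le> enn2real (ennreal (2 * (\<integral>p. (norm (F (fst p) - G (snd p)))\<^sup>2 \<partial>P)))"
    by (rule enn2real_mono[OF le2]) simp
  then show ?thesis using I0 eqL by simp
qed


lemma pair_bound:
  fixes F G :: "'s \<Rightarrow> 'k::euclidean_space" and \<psi> :: "'k \<Rightarrow> 'd::euclidean_space" and B :: nat
  assumes Fm[measurable]: "F \<in> borel_measurable S" and Gm[measurable]: "G \<in> borel_measurable S"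
    and psim[measurable]: "\<psi> \<in> borel_measurable borel"
    and Fi: "integrable SD (\<lambda>s. (norm (F s))\<^sup>2)" and Gi: "integrable SD (\<lambda>s. (norm (G s))\<^sup>2)"
    and pFi: "integrable SD (\<lambda>s. (norm (\<psi> (F s)))\<^sup>2)" and pGi: "integrable SD (\<lambda>s. (norm (\<psi> (G s)))\<^sup>2)"
    and u: "u > 0" and lip: "\<And>x y. norm (\<psi> x - \<psi> y) \<ge> u * norm (x - y)"
    and B: "B \<ge> 1"
  shows "u\<^sup>2 / (2 * real B) * (\<integral>s. (norm (F s - G s))\<^sup>2 \<partial>SD)
    \<le> (\<integral>\<omega>. (norm ((1 / real B) *\<^sub>R (\<Sum>b<B. \<psi> (F (fst (\<omega> b))))
                     - (1 / real B) *\<^sub>R (\<Sum>b<B. \<psi> (G (snd (\<omega> b))))))\<^sup>2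
        \<partial>(\<Pi>\<^sub>M b\<in>{..<B}. P))"
proof -
  define X where "X p = \<psi> (F (fst p)) - \<psi> (G (snd p))" for p
  have Xm: "X \<in> borel_measurable P" unfolding X_def[abs_def] by measurable
  have Xi: "integrable P (\<lambda>p. (norm (X p))\<^sup>2)"
    unfolding X_def by (rule int_P_diff[of "\<lambda>s. \<psi> (F s)" "\<lambda>s. \<psi> (G s)"]) (use pFi pGi in auto)
  have Di: "integrable P (\<lambda>p. (norm (F (fst p) - G (snd p)))\<^sup>2)" by (rule int_P_diff) fact+
  let ?\<Omega> = "\<Pi>\<^sub>M b\<in>{..<B}. P"
  define C where "C = (\<integral>s. (norm (F s - G s))\<^sup>2 \<partial>SD)"
  define D where "D = (\<integral>p. (norm (F (fst p) - G (snd p)))\<^sup>2 \<partial>P)"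
  define E where "E = (\<integral>p. (norm (X p))\<^sup>2 \<partial>P)"
  define W where "W = (\<integral>\<omega>. (norm (\<Sum>b<B. X (\<omega> b)))\<^sup>2 \<partial>?\<Omega>)"
  have A: "real B * E \<le> W" unfolding E_def W_def by (rule stepA[OF P_prob Xm Xi])
  have Bst: "u\<^sup>2 * D \<le> E"
  proof -
    have "u\<^sup>2 * D = (\<integral>p. u\<^sup>2 * (norm (F (fst p) - G (snd p)))\<^sup>2 \<partial>P)" by (simp add: D_def)
    also have "\<dots> \<le> E" unfolding E_def
    proof (rule integral_mono)
      show "integrable P (\<lambda>p. u\<^sup>2 * (norm (F (fst p) - G (snd p)))\<^sup>2)" using Di by simp
      show "integrable P (\<lambda>p. (norm (X p))\<^sup>2)" by (rule Xi)
      fix p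
      have "u\<^sup>2 * (norm (F (fst p) - G (snd p)))\<^sup>2 = (u * norm (F (fst p) - G (snd p)))\<^sup>2"
        by (simp add: power_mult_distrib)
      also have "\<dots> \<le> (norm (X p))\<^sup>2" unfolding X_def
        by (rule power_mono[OF lip]) (use u in simp)
      finally show "u\<^sup>2 * (norm (F (fst p) - G (snd p)))\<^sup>2 \<le> (norm (X p))\<^sup>2" .
    qed
    finally show ?thesis .
  qed
  have Cst: "C \<le> 2 * D" unfolding C_def D_def by (rule stepC) fact+
  have eqW: "(\<integral>\<omega>. (norm ((1 / real B) *\<^sub>R (\<Sum>b<B. \<psi> (F (fst (\<omega> b))))
                     - (1 / real B) *\<^sub>R (\<Sum>b<B. \<psi> (G (snd (\<omega> b))))))\<^sup>2 \<partial>?\<Omega>) = (1 / real B)\<^sup>2 * W"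
  proof -
    have "(norm ((1 / real B) *\<^sub>R (\<Sum>b<B. \<psi> (F (fst (\<omega> b))))
                     - (1 / real B) *\<^sub>R (\<Sum>b<B. \<psi> (G (snd (\<omega> b))))))\<^sup>2
          = (1 / real B)\<^sup>2 * (norm (\<Sum>b<B. X (\<omega> b)))\<^sup>2" for \<omega>
      by (simp add: X_def scaleR_diff_right[symmetric] sum_subtractf power_mult_distrib power_divide)
    then show ?thesis by (simp add: W_def)
  qed
  have Bpos: "real B > 0" using B by simp
  have u2: "0 \<le> u\<^sup>2 / (2 * real B)" by simp
  have "u\<^sup>2 / (2 * real B) * C \<le> u\<^sup>2 / (2 * real B) * (2 * D)" by (rule mult_left_mono[OF Cst u2])
  also have "\<dots> = (u\<^sup>2 * D) / real B" by (simp add: field_simps)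
  also have "\<dots> \<le> E / real B" using Bst Bpos by (simp add: divide_right_mono)
  also have "\<dots> = (1 / real B)\<^sup>2 * (real B * E)" using Bpos by (simp add: field_simps power2_eq_square)
  also have "\<dots> \<le> (1 / real B)\<^sup>2 * W" by (rule mult_left_mono[OF A]) simp
  finally show ?thesis unfolding eqW C_def .
qed

end

theorem proposition5:
  fixes E :: "'e set" and Q :: "'a measure" and \<rho> :: "'a \<Rightarrow> 's measure"
    and S :: "'s measure" and z :: "'e \<Rightarrow> 's \<Rightarrow> 'k::euclidean_space"
    and \<psi> :: "'k \<Rightarrow> 'd::euclidean_space" and u :: real and B :: nat
  assumes "finite E" and "E \<noteq> {}"
    and "prob_space Q"
    and "\<rho> \<in> Q \<rightarrow>\<^sub>M prob_algebra S"
    and "\<And>e. e \<in> E \<Longrightarrow> z e \<in> borel_measurable S"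
    and "\<psi> \<in> borel_measurable borel"
    and "\<And>e. e \<in> E \<Longrightarrow> integrable (state_dist Q \<rho>) (\<lambda>s. (norm (z e s))\<^sup>2)"
    and "\<And>e. e \<in> E \<Longrightarrow> integrable (state_dist Q \<rho>) (\<lambda>s. (norm (\<psi> (z e s)))\<^sup>2)"
    and "u > 0"
    and "\<And>x y. norm (\<psi> x - \<psi> y) \<ge> u * norm (x - y)"
    and "B \<ge> 1"
  shows "L_MMD E Q \<rho> S z \<psi> B \<ge> u\<^sup>2 / (2 * real B) * rhs_expect E Q \<rho> z
         \<and> (\<forall>\<delta>. rhs_expect E Q \<rho> z \<ge> \<delta> \<longrightarrow> L_MMD E Q \<rho> S z \<psi> B \<ge> u\<^sup>2 * \<delta> / (2 * real B))"
proof -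
  interpret mmd Q \<rho> S by (rule mmd.intro) (rule assms)+
  define I where "I e e' = (\<integral>\<omega>. (norm ((1 / real B) *\<^sub>R (\<Sum>b<B. \<psi> (z e (fst (\<omega> b))))
                     - (1 / real B) *\<^sub>R (\<Sum>b<B. \<psi> (z e' (snd (\<omega> b))))))\<^sup>2
        \<partial>(\<Pi>\<^sub>M b\<in>{..<B}. pair_state_dist Q \<rho> S))" for e e'
  define J where "J e e' = (\<integral>s. (norm (z e s - z e' s))\<^sup>2 \<partial>(state_dist Q \<rho>))" for e e'
  have pb: "u\<^sup>2 / (2 * real B) * J e e' \<le> I e e'" if "e \<in> E" "e' \<in> E" for e e'
    unfolding I_def J_def
    by (rule pair_bound) (use assms that in auto)
  have c: "0 \<le> u\<^sup>2 / (2 * real B)" by simp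
  have main: "u\<^sup>2 / (2 * real B) * rhs_expect E Q \<rho> z \<le> L_MMD E Q \<rho> S z \<psi> B"
  proof -
    have "u\<^sup>2 / (2 * real B) * rhs_expect E Q \<rho> z
        = (1 / real (card E) ^ 2) * (\<Sum>e\<in>E. \<Sum>e'\<in>E. u\<^sup>2 / (2 * real B) * J e e')"
      unfolding rhs_expect_def J_def by (simp add: sum_distrib_left algebra_simps)
    also have "\<dots> \<le> (1 / real (card E) ^ 2) * (\<Sum>e\<in>E. \<Sum>e'\<in>E. I e e')"
      by (intro mult_left_mono sum_mono pb) auto
    also have "\<dots> = L_MMD E Q \<rho> S z \<psi> B" unfolding L_MMD_def I_def ..
    finally show ?thesis .
  qed
  moreover have "\<forall>\<delta>. rhs_expect E Q \<rho> z \<ge> \<delta> \<longrightarrow> L_MMD E Q \<rho> S z \<psi> B \<ge> u\<^sup>2 * \<delta> / (2 * real B)"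
  proof (intro allI impI)
    fix \<delta> assume "rhs_expect E Q \<rho> z \<ge> \<delta>"
    then have "u\<^sup>2 / (2 * real B) * \<delta> \<le> u\<^sup>2 / (2 * real B) * rhs_expect E Q \<rho> z"
      by (rule mult_left_mono[OF _ c])
    with main show "L_MMD E Q \<rho> S z \<psi> B \<ge> u\<^sup>2 * \<delta> / (2 * real B)" by simp
  qed
  ultimately show ?thesis by simp
qed

end
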